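(* Let $X$ be a $T_1$ space and $\mathcal{P}$ an ideal of closed subsets of $X$ such that $X$ is $\tau\mathcal{P}$-pseudocompact. Then $C(X)_\mathcal{P}$ is closed under uniform limits if and only if $C^*(X)_\mathcal{P}$, equipped with the norm $\|f\|=\sup\{|f(x)|\colon x\in X\}$, is a Banach space.
   Context: An ideal of closed subsets of $X$ is a family $\mathcal{P}$ of closed subsets closed under finite unions and under passing to closed subsets. $D_f$ is the set of discontinuity points of $f\in\mathbb{R}^X$; $C(X)_\mathcal{P}=\{f\in\mathbb{R}^X\colon \overline{D_f}\in\mathcal{P}\}$ and $C^*(X)_\mathcal{P}$ is the set of its bounded members. $X$ is $\tau\mathcal{P}$-pseudocompact if $C(X)_\mathcal{P}=C^*(X)_\mathcal{P}$. $C(X)_\mathcal{P}$ is closed under uniform limits if whenever a sequence in $C(X)_\mathcal{P}$ converges uniformly on $X$ to $f\in\mathbb{R}^X$, then $f\in C(X)_\mathcal{P}$. *)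

theory Defs
  imports "HOL-Analysis.Analysis"
begin

text \<open>The space X is the whole type 'a (a topological space via type class).\<close>

definition closed_ideal :: "'a::topological_space set set \<Rightarrow> bool" where
  "closed_ideal P \<longleftrightarrow> P \<noteq> {} \<and> (\<forall>A\<in>P. closed A)
     \<and> (\<forall>A\<in>P. \<forall>B\<in>P. A \<union> B \<in> P)
     \<and> (\<forall>A\<in>P. \<forall>B. closed B \<and> B \<subseteq> A \<longrightarrow> B \<in> P)"

definition discont_points :: "('a::topological_space \<Rightarrow> real) \<Rightarrow> 'a set" where
  "discont_points f = {x. \<not> (f \<longlongrightarrow> f x) (at x)}"

definition CP :: "'a::topological_space set set \<Rightarrow> ('a \<Rightarrow> real) set" where
  "CP P = {f. closure (discont_points f) \<in> P}"

definition CPstar :: "'a::topological_space set set \<Rightarrow> ('a \<Rightarrow> real) set" where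
  "CPstar P = {f \<in> CP P. bounded (range f)}"

definition tauP_pseudocompact :: "'a::topological_space set set \<Rightarrow> bool" where
  "tauP_pseudocompact P \<longleftrightarrow> CP P = CPstar P"

definition closed_under_uniform_limits :: "('a \<Rightarrow> real) set \<Rightarrow> bool" where
  "closed_under_uniform_limits S \<longleftrightarrow>
     (\<forall>fs f. (\<forall>n. fs n \<in> S) \<and> uniform_limit UNIV fs f sequentially \<longrightarrow> f \<in> S)"

definition sup_norm :: "('a \<Rightarrow> real) \<Rightarrow> real" where
  "sup_norm f = (SUP x. \<bar>f x\<bar>)"

definition banach_sup :: "('a \<Rightarrow> real) set \<Rightarrow> bool" where
  "banach_sup S \<longleftrightarrow>
     (\<lambda>x. 0) \<in> S
     \<and> (\<forall>f\<in>S. \<forall>g\<in>S. (\<lambda>x. f x + g x) \<in> S)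
     \<and> (\<forall>c::real. \<forall>f\<in>S. (\<lambda>x. c * f x) \<in> S)
     \<and> (\<forall>fs. (\<forall>n. fs n \<in> S) \<and>
          (\<forall>e>0. \<exists>N. \<forall>m\<ge>N. \<forall>n\<ge>N. sup_norm (\<lambda>x. fs m x - fs n x) < e)
        \<longrightarrow> (\<exists>g\<in>S. (\<lambda>n. sup_norm (\<lambda>x. fs n x - g x)) \<longlonglongrightarrow> 0))"

end

theory Submission
  imports Defs
begin

lemma sup_norm_bound:
  fixes h :: "'a \<Rightarrow> real"
  assumes "\<And>x. \<bar>h x\<bar> \<le> B"
  shows "0 \<le> sup_norm h" "sup_norm h \<le> B"
proof -
  have bdd: "bdd_above (range (\<lambda>x. \<bar>h x\<bar>))" by (intro bdd_aboveI[where M=B]) (auto simp: assms)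
  have "\<bar>h undefined\<bar> \<le> sup_norm h" unfolding sup_norm_def
    by (rule cSUP_upper[OF _ bdd]) simp
  then show "0 \<le> sup_norm h" by linarith
  show "sup_norm h \<le> B" unfolding sup_norm_def
    by (rule cSUP_least) (auto simp: assms)
qed

lemma sup_norm_ge:
  fixes h :: "'a \<Rightarrow> real"
  assumes "bounded (range h)"
  shows "\<bar>h x\<bar> \<le> sup_norm h"
proof -
  obtain B where B: "\<forall>y\<in>range h. norm y \<le> B" using assms bounded_iff by metis
  have bdd: "bdd_above (range (\<lambda>x. \<bar>h x\<bar>))" using B by (intro bdd_aboveI[where M=B]) auto
  show ?thesis unfolding sup_norm_def by (rule cSUP_upper[OF _ bdd]) simp
qed

lemma bounded_diff_fun:
  fixes f g :: "'a \<Rightarrow> real"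
  assumes "bounded (range f)" "bounded (range g)"
  shows "bounded (range (\<lambda>x. f x - g x))"
proof -
  obtain B where B: "\<forall>y\<in>range f. norm y \<le> B" using assms(1) bounded_iff by metis
  obtain C where C: "\<forall>y\<in>range g. norm y \<le> C" using assms(2) bounded_iff by metis
  have "\<forall>y\<in>range (\<lambda>x. f x - g x). norm y \<le> B + C"
  proof
    fix y assume "y \<in> range (\<lambda>x. f x - g x)"
    then obtain x where "y = f x - g x" by auto
    moreover have "\<bar>f x\<bar> \<le> B" "\<bar>g x\<bar> \<le> C" using B C by auto
    ultimately show "norm y \<le> B + C" by simp
  qed
  then show ?thesis using bounded_iff by blast
qed

lemma CP_zero:
  assumes "closed_ideal P"
  shows "(\<lambda>x. 0) \<in> CP P"
proof -
  have "discont_points (\<lambda>x::'a. 0::real) = {}" by (simp add: discont_points_def)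
  moreover obtain A where "A \<in> P" using assms unfolding closed_ideal_def by (metis ex_in_conv)
  moreover have "\<forall>A\<in>P. \<forall>B. closed B \<and> B \<subseteq> A \<longrightarrow> B \<in> P" using assms unfolding closed_ideal_def by blast
  ultimately have "{} \<in> P" by blast
  then show ?thesis using \<open>discont_points (\<lambda>x::'a. 0::real) = {}\<close> unfolding CP_def by simp
qed

lemma ideal_un:
  assumes "closed_ideal P" "A \<in> P" "B \<in> P"
  shows "A \<union> B \<in> P"
  using assms unfolding closed_ideal_def by blast

lemma ideal_sub:
  assumes "closed_ideal P" "A \<in> P" "closed B" "B \<subseteq> A"
  shows "B \<in> P"
proof -
  have "\<forall>A\<in>P. \<forall>B. closed B \<and> B \<subseteq> A \<longrightarrow> B \<in> P" using assms(1) unfolding closed_ideal_def by blast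
  then show ?thesis using assms(2-4) by blast
qed

lemma CP_add:
  assumes "closed_ideal P" "f \<in> CP P" "g \<in> CP P"
  shows "(\<lambda>x. f x + g x) \<in> CP P"
proof -
  have "discont_points (\<lambda>x. f x + g x) \<subseteq> discont_points f \<union> discont_points g"
    unfolding discont_points_def using tendsto_add by fastforce
  then have "closure (discont_points (\<lambda>x. f x + g x)) \<subseteq> closure (discont_points f) \<union> closure (discont_points g)"
    by (metis closure_Un closure_mono)
  moreover have "closure (discont_points f) \<union> closure (discont_points g) \<in> P"
    using assms unfolding CP_def by (intro ideal_un[OF assms(1)]) auto
  ultimately show ?thesis unfolding CP_def
    by (intro CollectI) (rule ideal_sub[OF assms(1)], assumption, simp, assumption)
qed

lemma CP_scale:
  assumes "closed_ideal P" "f \<in> CP P"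
  shows "(\<lambda>x. c * f x) \<in> CP P"
proof -
  have "discont_points (\<lambda>x. c * f x) \<subseteq> discont_points f"
    unfolding discont_points_def using tendsto_mult_left by fastforce
  then have "closure (discont_points (\<lambda>x. c * f x)) \<subseteq> closure (discont_points f)"
    by (metis closure_mono)
  moreover have "closure (discont_points f) \<in> P" using assms(2) unfolding CP_def by simp
  ultimately show ?thesis unfolding CP_def
    by (intro CollectI) (rule ideal_sub[OF assms(1)], assumption, simp, assumption)
qed

schematic_goal main_result:
  fixes P :: "'a::t1_space set set"
  assumes "closed_ideal P"
    and "tauP_pseudocompact P"
  shows "?t = True \<and> (closed_under_uniform_limits (CP P) \<longleftrightarrow> banach_sup (CPstar P))"
proof (rule conjI[OF refl], rule iffI)
  have eq: "CP P = CPstar P" using assms(2) unfolding tauP_pseudocompact_def .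
  have bnd: "bounded (range f)" if "f \<in> CP P" for f using that eq unfolding CPstar_def by auto
  assume cl: "closed_under_uniform_limits (CP P)"
  show "banach_sup (CPstar P)"
    unfolding banach_sup_def eq[symmetric]
  proof (intro conjI ballI allI impI)
    show "(\<lambda>x. 0) \<in> CP P" by (rule CP_zero[OF assms(1)])
    show "(\<lambda>x. f x + g x) \<in> CP P" if "f \<in> CP P" "g \<in> CP P" for f g
      using CP_add[OF assms(1) that] .
    show "(\<lambda>x. c * f x) \<in> CP P" if "f \<in> CP P" for f c
      using CP_scale[OF assms(1) that] .
    fix fs :: "nat \<Rightarrow> 'a \<Rightarrow> real"
    assume H: "(\<forall>n. fs n \<in> CP P) \<and> (\<forall>e>0. \<exists>N. \<forall>m\<ge>N. \<forall>n\<ge>N. sup_norm (\<lambda>x. fs m x - fs n x) < e)"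
    have pt: "\<bar>fs m x - fs n x\<bar> \<le> sup_norm (\<lambda>x. fs m x - fs n x)" for m n x
      by (rule sup_norm_ge, rule bounded_diff_fun; rule bnd; use H in blast)
    define g where "g x = lim (\<lambda>n. fs n x)" for x
    have conv: "(\<lambda>n. fs n x) \<longlonglongrightarrow> g x" for x
    proof -
      have "Cauchy (\<lambda>n. fs n x)"
      proof (rule CauchyI)
        fix e :: real assume "0 < e"
        then obtain N where NN: "\<forall>m\<ge>N. \<forall>n\<ge>N. sup_norm (\<lambda>x. fs m x - fs n x) < e" using H by blast
        have "norm (fs m x - fs n x) < e" if "m \<ge> N" "n \<ge> N" for m n
        proof -
          have "sup_norm (\<lambda>x. fs m x - fs n x) < e" using NN that by blast
          with pt[of m x n] show ?thesis by simp
        qed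
        then show "\<exists>M. \<forall>m\<ge>M. \<forall>n\<ge>M. norm (fs m x - fs n x) < e" by blast
      qed
      then show ?thesis unfolding g_def using real_Cauchy_convergent convergent_LIMSEQ_iff by blast
    qed
    have unif: "\<exists>N. \<forall>n\<ge>N. \<forall>x. \<bar>fs n x - g x\<bar> \<le> e" if "e > 0" for e
    proof -
      obtain N where N: "\<forall>m\<ge>N. \<forall>n\<ge>N. sup_norm (\<lambda>x. fs m x - fs n x) < e" using H \<open>e>0\<close> by blast
      have "\<bar>fs n x - g x\<bar> \<le> e" if "n \<ge> N" for n x
      proof -
        have "(\<lambda>m. \<bar>fs m x - fs n x\<bar>) \<longlonglongrightarrow> \<bar>g x - fs n x\<bar>"
          by (intro tendsto_intros conv)
        moreover have "\<forall>m\<ge>N. \<bar>fs m x - fs n x\<bar> \<le> e"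
        proof (intro allI impI)
          fix m assume "m \<ge> N"
          then have "sup_norm (\<lambda>x. fs m x - fs n x) < e" using N that by blast
          with pt[of m x n] show "\<bar>fs m x - fs n x\<bar> \<le> e" by simp
        qed
        ultimately have "\<bar>g x - fs n x\<bar> \<le> e" using LIMSEQ_le_const2 by blast
        then show ?thesis by simp
      qed
      then show ?thesis by blast
    qed
    have "uniform_limit UNIV fs g sequentially"
      unfolding uniform_limit_sequentially_iff
    proof (intro allI impI)
      fix e :: real assume "e > 0"
      then obtain N where N: "\<forall>n\<ge>N. \<forall>x. \<bar>fs n x - g x\<bar> \<le> e/2" using unif[of "e/2"] by auto
      have "dist (fs n x) (g x) < e" if "n \<ge> N" for n x
      proof -
        have "\<bar>fs n x - g x\<bar> \<le> e/2" using N that by blast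
        then show ?thesis using \<open>e>0\<close> by (simp add: dist_real_def)
      qed
      then show "\<exists>N. \<forall>n\<ge>N. \<forall>x\<in>UNIV. dist (fs n x) (g x) < e" by blast
    qed
    then have "(\<forall>n. fs n \<in> CP P) \<and> uniform_limit UNIV fs g sequentially" using H[THEN conjunct1] by (rule conjI[rotated])
    then have gin: "g \<in> CP P" by (rule cl[unfolded closed_under_uniform_limits_def, rule_format])
    have "(\<lambda>n. sup_norm (\<lambda>x. fs n x - g x)) \<longlonglongrightarrow> 0"
      unfolding LIMSEQ_iff
    proof (intro allI impI)
      fix r :: real assume "r > 0"
      then obtain N where N: "\<forall>n\<ge>N. \<forall>x. \<bar>fs n x - g x\<bar> \<le> r/2" using unif[of "r/2"] by auto
      have "norm (sup_norm (\<lambda>x. fs n x - g x) - 0) < r" if "n \<ge> N" for n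
      proof -
        have "0 \<le> sup_norm (\<lambda>x. fs n x - g x)" "sup_norm (\<lambda>x. fs n x - g x) \<le> r/2"
          using sup_norm_bound[of "\<lambda>x. fs n x - g x" "r/2"] N that by auto
        then show ?thesis using \<open>r>0\<close> by simp
      qed
      then show "\<exists>no. \<forall>n\<ge>no. norm (sup_norm (\<lambda>x. fs n x - g x) - 0) < r" by blast
    qed
    then show "\<exists>g\<in>CP P. (\<lambda>n. sup_norm (\<lambda>x. fs n x - g x)) \<longlonglongrightarrow> 0" using gin by blast
  qed
next
  have eq: "CP P = CPstar P" using assms(2) unfolding tauP_pseudocompact_def .
  have bnd: "bounded (range f)" if "f \<in> CP P" for f using that eq unfolding CPstar_def by auto
  assume B: "banach_sup (CPstar P)"
  show "closed_under_uniform_limits (CP P)"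
    unfolding closed_under_uniform_limits_def
  proof (intro allI impI)
    fix fs f assume H: "(\<forall>n. fs n \<in> CP P) \<and> uniform_limit UNIV fs f sequentially"
    have U: "\<exists>N. \<forall>n\<ge>N. \<forall>x. \<bar>fs n x - f x\<bar> < e" if "e > 0" for e
      using H that unfolding uniform_limit_sequentially_iff by (simp add: dist_real_def)
    have cauchy: "\<forall>e>0. \<exists>N. \<forall>m\<ge>N. \<forall>n\<ge>N. sup_norm (\<lambda>x. fs m x - fs n x) < e"
    proof (intro allI impI)
      fix e :: real assume "e > 0"
      then obtain N where N: "\<forall>n\<ge>N. \<forall>x. \<bar>fs n x - f x\<bar> < e/3" using U[of "e/3"] by auto
      have "sup_norm (\<lambda>x. fs m x - fs n x) < e" if "m \<ge> N" "n \<ge> N" for m n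
      proof -
        have "\<bar>fs m x - fs n x\<bar> \<le> 2*e/3" for x
        proof -
          have "\<bar>fs m x - f x\<bar> < e/3" "\<bar>fs n x - f x\<bar> < e/3" using N that by auto
          then show ?thesis by linarith
        qed
        then have "sup_norm (\<lambda>x. fs m x - fs n x) \<le> 2*e/3" by (rule sup_norm_bound(2))
        then show ?thesis using \<open>e>0\<close> by linarith
      qed
      then show "\<exists>N. \<forall>m\<ge>N. \<forall>n\<ge>N. sup_norm (\<lambda>x. fs m x - fs n x) < e" by blast
    qed
    obtain g where g: "g \<in> CP P" and gl: "(\<lambda>n. sup_norm (\<lambda>x. fs n x - g x)) \<longlonglongrightarrow> 0"
    proof -
      have Bc: "\<forall>fs. (\<forall>n. fs n \<in> CP P) \<and>
          (\<forall>e>0. \<exists>N. \<forall>m\<ge>N. \<forall>n\<ge>N. sup_norm (\<lambda>x. fs m x - fs n x) < e)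
        \<longrightarrow> (\<exists>g\<in>CP P. (\<lambda>n. sup_norm (\<lambda>x. fs n x - g x)) \<longlonglongrightarrow> 0)"
        using B unfolding banach_sup_def eq[symmetric] by (rule conjunct2[THEN conjunct2[THEN conjunct2]])
      have "(\<forall>n. fs n \<in> CP P) \<and> (\<forall>e>0. \<exists>N. \<forall>m\<ge>N. \<forall>n\<ge>N. sup_norm (\<lambda>x. fs m x - fs n x) < e)"
        using H cauchy by simp
      then have "\<exists>g\<in>CP P. (\<lambda>n. sup_norm (\<lambda>x. fs n x - g x)) \<longlonglongrightarrow> 0" using Bc by simp
      then show ?thesis using that by blast
    qed
    have "f x = g x" for x
    proof -
      have hb: "\<bar>fs n x - g x\<bar> \<le> sup_norm (\<lambda>x. fs n x - g x)" for n
        by (rule sup_norm_ge, rule bounded_diff_fun; rule bnd; use H g in blast)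
      have "(\<lambda>n. fs n x - g x) \<longlonglongrightarrow> 0"
        by (rule Lim_null_comparison[OF _ gl]) (simp add: hb)
      then have "(\<lambda>n. fs n x) \<longlonglongrightarrow> g x" by (simp add: LIM_zero_iff)
      moreover have "(\<lambda>n. fs n x) \<longlonglongrightarrow> f x"
        using H by (intro tendsto_uniform_limitI[where S=UNIV]) auto
      ultimately show ?thesis by (rule LIMSEQ_unique[rotated])
    qed
    then have "f = g" by auto
    then show "f \<in> CP P" using g by simp
  qed
qed


theorem theorem4p4:
  fixes P :: "'a::t1_space set set"
  assumes "closed_ideal P"
    and "tauP_pseudocompact P"
  shows "closed_under_uniform_limits (CP P) \<longleftrightarrow> banach_sup (CPstar P)"
  using main_result[OF assms] by (rule conjunct2)

end
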